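(* Let $n\ge3$ and let $b_1,\dots,b_n$ be positive integers; let $r=(b_1+\dots+b_n)-\max_j b_j$ be the degree of the $h$-polynomial of $R_{[\mathbf b]}$. (1) $r=2$ if and only if, up to permutation, $n=3$ and $[\mathbf b]=[1,1,b]$ with $b\ge1$; in this case the $h$-polynomial is $1+(3b+1)t+b^2t^2$. (2) $r=3$ if and only if, up to permutation, either $n=3$ and $[\mathbf b]=[1,2,b]$ with $b\ge2$, or $n=4$ and $[\mathbf b]=[1,1,1,b]$ with $b\ge1$. In the first case the $h$-vector is $h_0=1$, $h_1=5b+2$, $h_2=\frac{7b^2+b}{2}$, $h_3=\frac{b^2(b-1)}{2}$; in the second case it is $h_0=1$, $h_1=7b+4$, $h_2=6b^2+4b+1$, $h_3=b^3$.
   Context: Let $K$ be a field, $\mathcal M=\{0,\dots,b_1\}\times\dots\times\{0,\dots,b_n\}$, $S=K[T_v\mid v\in\mathcal M]$ standard graded, $\mathcal J_{[\mathbf b]}=\ker(T_v\mapsto x_{1,v_1}\cdots x_{n,v_n})$, $R_{[\mathbf b]}=S/\mathcal J_{[\mathbf b]}$ of Krull dimension $d=b_1+\dots+b_n+1$. The $h$-polynomial $h(t)=\sum_kh_kt^k$ is defined by $\sum_{l\ge0}\dim_K(R_{[\mathbf b]})_lt^l=h(t)/(1-t)^d$. *)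

theory Defs
  imports "HOL-Library.Multiset" "HOL-Computational_Algebra.Formal_Power_Series"
          "HOL-Computational_Algebra.Polynomial_FPS"
begin

text \<open>The multi-index [b] = [b_1,...,b_n] is a list bs of length n (0-based positions).
  The index set M = {0..b_1} x ... x {0..b_n} is the set of lists v of length n with v!i \<le> bs!i.\<close>
definition idx_set :: "nat list \<Rightarrow> nat list set" where
  "idx_set bs = {v. length v = length bs \<and> (\<forall>i<length bs. v ! i \<le> bs ! i)}"

text \<open>Monomials of degree l in S = K[T_v | v in M], represented as multisets over M of size l.\<close>
definition S_monomials :: "nat list \<Rightarrow> nat \<Rightarrow> nat list multiset set" where
  "S_monomials bs l = {m. set_mset m \<subseteq> idx_set bs \<and> size m = l}"

text \<open>The monomial map T_v \<mapsto> x_{1,v_1}...x_{n,v_n}; a monomial in the variables x_{i,j}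
  is represented as a multiset of pairs (i,j).\<close>
definition phi_mon :: "nat list \<Rightarrow> nat list multiset \<Rightarrow> (nat \<times> nat) multiset" where
  "phi_mon bs m = (\<Sum>v\<in>#m. mset (map (\<lambda>i. (i, v ! i)) [0..<length bs]))"

text \<open>dim_K (R_[b])_l: the degree-l component of S/J_[b] is isomorphic to the K-span of the
  images of the degree-l monomials of S; these images are monomials in the x_{i,j}, which are
  linearly independent, so the dimension is the number of distinct image monomials.\<close>
definition hilb_fun :: "nat list \<Rightarrow> nat \<Rightarrow> nat" where
  "hilb_fun bs l = card (phi_mon bs ` S_monomials bs l)"

definition hilb_series :: "nat list \<Rightarrow> rat fps" where
  "hilb_series bs = Abs_fps (\<lambda>l. of_nat (hilb_fun bs l))"

definition krull_dim :: "nat list \<Rightarrow> nat" where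
  "krull_dim bs = sum_list bs + 1"

definition is_h_poly :: "nat list \<Rightarrow> rat poly \<Rightarrow> bool" where
  "is_h_poly bs h \<longleftrightarrow> fps_of_poly h = hilb_series bs * (1 - fps_X) ^ krull_dim bs"

definition r_deg :: "nat list \<Rightarrow> nat" where
  "r_deg bs = sum_list bs - Max (set bs)"

end

theory Submission
  imports Defs
begin


lemma filter_sum_pair_out:
  fixes A :: "nat \<Rightarrow> 'b multiset"
  assumes "n \<le> i"
  shows "filter_mset (\<lambda>p. fst p = i) (\<Sum>j<n. image_mset (Pair j) (A j)) = {#}"
  using assms by (induction n) (auto simp: filter_mset_eq_mempty_iff)

lemma filter_sum_pair:
  fixes A :: "nat \<Rightarrow> 'b multiset"
  assumes "i < n"
  shows "filter_mset (\<lambda>p. fst p = i) (\<Sum>j<n. image_mset (Pair j) (A j)) = image_mset (Pair i) (A i)"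
  using assms
proof (induction n)
  case 0 then show ?case by simp
next
  case (Suc n)
  show ?case
  proof (cases "i = n")
    case True
    have "filter_mset (\<lambda>p. fst p = i) (image_mset (Pair n) (A n)) = image_mset (Pair i) (A i)"
      using True by (simp add: filter_mset_image_mset comp_def)
    then show ?thesis using True filter_sum_pair_out[of n i A] by simp
  next
    case False
    then have "i < n" using Suc by simp
    have "filter_mset (\<lambda>p. fst p = i) (image_mset (Pair n) (A n)) = {#}"
      using False by (auto simp: filter_mset_eq_mempty_iff)
    then show ?thesis using Suc.IH[OF \<open>i < n\<close>] by simp
  qed
qed

definition Psi :: "nat list \<Rightarrow> nat list multiset \<Rightarrow> nat multiset list" where
  "Psi bs m = map (\<lambda>i. image_mset (\<lambda>v. v ! i) m) [0..<length bs]"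

definition Fm :: "nat \<Rightarrow> nat multiset list \<Rightarrow> (nat \<times> nat) multiset" where
  "Fm n Ms = (\<Sum>j<n. image_mset (Pair j) (Ms ! j))"

lemma mset_map_upt: "mset (map f [0..<n]) = (\<Sum>i<n. {#f i#})"
  by (induction n) auto

lemma sum_swap_aux: "(\<Sum>v\<in>#m. (\<Sum>j<n. {#f j v#})) = (\<Sum>j<n. image_mset (f j) m)"
  by (induction m) (simp_all add: sum.distrib[symmetric])

lemma phi_mon_eq: "phi_mon bs m = (\<Sum>j<length bs. image_mset (Pair j) (image_mset (\<lambda>v. v ! j) m))"
proof -
  have "phi_mon bs m = (\<Sum>v\<in>#m. (\<Sum>j<length bs. {#(\<lambda>j v. (j, v ! j)) j v#}))"
    unfolding phi_mon_def by (simp only: mset_map_upt)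
  also have "\<dots> = (\<Sum>j<length bs. image_mset (\<lambda>v. (j, v ! j)) m)"
    by (rule sum_swap_aux)
  finally show ?thesis by (simp add: image_mset.compositionality comp_def)
qed

lemma phi_Fm: "phi_mon bs m = Fm (length bs) (Psi bs m)"
  unfolding phi_mon_eq Fm_def Psi_def by simp

lemma inj_Fm: "inj_on (Fm n) {Ms. length Ms = n}"
proof (rule inj_on_inverseI)
  fix Ms :: "nat multiset list" assume "Ms \<in> {Ms. length Ms = n}"
  then have len: "length Ms = n" by simp
  show "map (\<lambda>i. image_mset snd (filter_mset (\<lambda>p. fst p = i) (Fm n Ms))) [0..<n] = Ms"
    unfolding Fm_def
    by (rule nth_equalityI) (auto simp: len filter_sum_pair image_mset.compositionality comp_def)
qed

lemma card_hilb: "hilb_fun bs l = card (Psi bs ` S_monomials bs l)"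
proof -
  have "phi_mon bs ` S_monomials bs l = Fm (length bs) ` (Psi bs ` S_monomials bs l)"
    by (auto simp: phi_Fm image_image)
  moreover have "inj_on (Fm (length bs)) (Psi bs ` S_monomials bs l)"
    by (rule inj_on_subset[OF inj_Fm]) (auto simp: Psi_def)
  ultimately show ?thesis unfolding hilb_fun_def by (simp add: card_image)
qed

definition Lset :: "nat list \<Rightarrow> nat \<Rightarrow> nat multiset list set" where
  "Lset bs l = {Ms. length Ms = length bs \<and> (\<forall>i<length bs. Ms ! i \<in> multisets_of_size {0..bs ! i} l)}"

lemma Psi_image: "Psi bs ` S_monomials bs l = Lset bs l"
proof
  show "Psi bs ` S_monomials bs l \<subseteq> Lset bs l"
    by (auto simp: Psi_def Lset_def S_monomials_def multisets_of_size_def idx_set_def subset_iff)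
next
  show "Lset bs l \<subseteq> Psi bs ` S_monomials bs l"
  proof
    fix Ms assume Ms: "Ms \<in> Lset bs l"
    define n where "n = length bs"
    define s where "s i = sorted_list_of_multiset (Ms ! i)" for i
    define m where "m = mset (map (\<lambda>k. map (\<lambda>i. s i ! k) [0..<n]) [0..<l])"
    have sz: "length (s i) = l" if "i < n" for i
      using Ms that unfolding s_def Lset_def multisets_of_size_def n_def
      by (metis (mono_tags, lifting) mem_Collect_eq mset_sorted_list_of_multiset size_mset)
    have st: "set (s i) \<subseteq> {0..bs ! i}" if "i < n" for i
      using Ms that unfolding s_def Lset_def multisets_of_size_def n_def by auto
    have "Psi bs m = Ms"
    proof (rule nth_equalityI)
      show "length (Psi bs m) = length Ms" using Ms by (simp add: Psi_def Lset_def)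
      fix i assume "i < length (Psi bs m)"
      then have i: "i < n" by (simp add: Psi_def n_def)
      have "Psi bs m ! i = mset (map (\<lambda>k. s i ! k) [0..<l])"
        using i by (simp add: Psi_def m_def n_def comp_def image_mset.compositionality)
      also have "map (\<lambda>k. s i ! k) [0..<l] = s i"
        using sz[OF i] by (metis map_nth)
      also have "mset (s i) = Ms ! i" by (simp add: s_def)
      finally show "Psi bs m ! i = Ms ! i" .
    qed
    moreover have "m \<in> S_monomials bs l"
      unfolding S_monomials_def idx_set_def m_def
      using st sz by (auto simp: n_def) (metis atLeastAtMost_iff nth_mem subsetD)
    ultimately show "Ms \<in> Psi bs ` S_monomials bs l" by blast
  qed
qed

lemma card_Lset: "card (Lset bs l) = prod_list (map (\<lambda>b. (b + l) choose l) bs)"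
proof (induction bs)
  case Nil
  have "Lset [] l = {[]}" by (auto simp: Lset_def)
  then show ?case by simp
next
  case (Cons b bs)
  have eq: "Lset (b # bs) l = (\<lambda>(x, xs). x # xs) ` (multisets_of_size {0..b} l \<times> Lset bs l)"
  proof
    show "Lset (b # bs) l \<subseteq> (\<lambda>(x, xs). x # xs) ` (multisets_of_size {0..b} l \<times> Lset bs l)"
    proof
      fix Ms assume Ms: "Ms \<in> Lset (b # bs) l"
      then obtain x xs where "Ms = x # xs" by (cases Ms) (auto simp: Lset_def)
      with Ms show "Ms \<in> (\<lambda>(x, xs). x # xs) ` (multisets_of_size {0..b} l \<times> Lset bs l)"
        unfolding Lset_def by (force simp: All_less_Suc2 intro!: image_eqI[of _ _ "(x, xs)"])
    qed
  next
    show "(\<lambda>(x, xs). x # xs) ` (multisets_of_size {0..b} l \<times> Lset bs l) \<subseteq> Lset (b # bs) l"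
      unfolding Lset_def by (auto simp: All_less_Suc2 nth_Cons split: nat.splits)
  qed
  have inj: "inj_on (\<lambda>(x, xs). x # xs) (multisets_of_size {0..b} l \<times> Lset bs l)"
    by (auto simp: inj_on_def)
  have "card (multisets_of_size {0..b::nat} l) = (b + l) choose l"
    by (simp add: card_multisets_of_size)
  then show ?case
    unfolding eq by (simp add: card_image[OF inj] card_cartesian_product Cons.IH)
qed

lemma hilb_fun_prod: "hilb_fun bs l = prod_list (map (\<lambda>b. (b + l) choose l) bs)"
  by (simp add: card_hilb Psi_image card_Lset)



definition Gk :: "nat \<Rightarrow> rat fps" where
  "Gk k = Abs_fps (\<lambda>n. of_nat ((k + n) choose n))"

lemma choose_fact_rat: "(of_nat ((k + j) choose j) :: rat) = fact (k + j) / (fact k * fact j)"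
  by (simp add: binomial_fact)

lemma Gk_nth: "fps_nth (Gk k) j = fact (k + j) / (fact k * fact j)"
  by (simp add: Gk_def choose_fact_rat)



lemma Gk_step: "Gk (Suc k) * (1 - fps_X) = Gk k"
proof (rule fps_ext)
  fix n
  show "fps_nth (Gk (Suc k) * (1 - fps_X)) n = fps_nth (Gk k) n"
  proof (cases n)
    case 0 then show ?thesis by (simp add: Gk_def algebra_simps)
  next
    case (Suc j)
    have "fps_nth (Gk (Suc k) * (1 - fps_X)) n = fps_nth (Gk (Suc k)) n - fps_nth (fps_X * Gk (Suc k)) n"
      by (simp add: algebra_simps)
    also have "\<dots> = of_nat ((Suc k + Suc j) choose Suc j) - of_nat ((Suc k + j) choose j)"
      using Suc by (simp add: Gk_def)
    also have "\<dots> = of_nat ((k + Suc j) choose Suc j)"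
    proof -
      have "(Suc k + Suc j) choose Suc j = ((Suc k + j) choose j) + ((k + Suc j) choose Suc j)"
        by (metis add_Suc add_Suc_right binomial_Suc_Suc)
      then show ?thesis by simp
    qed
    also have "\<dots> = fps_nth (Gk k) n" using Suc by (simp add: Gk_def)
    finally show ?thesis .
  qed
qed

lemma Gk_inv: "Gk k * (1 - fps_X) ^ Suc k = 1"
proof (induction k)
  case 0
  have "Gk 0 * (1 - fps_X) = 1"
  proof (rule fps_ext)
    fix n show "fps_nth (Gk 0 * (1 - fps_X)) n = fps_nth (1 :: rat fps) n"
      by (cases n) (simp_all add: Gk_def algebra_simps)
  qed
  then show ?case by simp
next
  case (Suc k)
  have "Gk (Suc k) * (1 - fps_X) ^ Suc (Suc k) = (Gk (Suc k) * (1 - fps_X)) * (1 - fps_X) ^ Suc k"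
    by (simp only: power_Suc mult.assoc)
  also have "\<dots> = 1" by (simp only: Gk_step Suc.IH)
  finally show ?case .
qed

lemma h_poly_via:
  assumes "krull_dim bs = Suc k" and "hilb_series bs = fps_of_poly h * Gk k"
  shows "is_h_poly bs h"
  unfolding is_h_poly_def assms
  by (simp add: mult.assoc Gk_inv del: power_Suc)

lemma prod_list_mset: "prod_list (map g xs) = prod_mset (image_mset g (mset xs))"
  by (induction xs) auto

lemma hilb_series_nth: "fps_nth (hilb_series bs) n = prod_mset (image_mset (\<lambda>b. fact (b + n) / (fact b * fact n)) (mset bs))"
proof -
  have "fps_nth (hilb_series bs) n = of_nat (prod_list (map (\<lambda>b. (b + n) choose n) bs))"
    by (simp add: hilb_series_def hilb_fun_prod)
  also have "\<dots> = prod_list (map (\<lambda>b. fact (b + n) / (fact b * fact n)) bs)"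
    by (induction bs) (simp_all add: choose_fact_rat)
  finally show ?thesis by (simp add: prod_list_mset)
qed

lemma sum_list_mset': "sum_list xs = sum_mset (mset xs)"
  by (induction xs) auto

lemma krull_mset: "krull_dim bs = sum_mset (mset bs) + 1"
  by (simp add: krull_dim_def sum_list_mset')

lemma poly_mult_nth:
  fixes a0 a1 a2 a3 :: rat and f :: "rat fps"
  shows
  "fps_nth (fps_of_poly [:a0, a1, a2, a3:] * f) n = a0 * fps_nth f n + (if n \<ge> 1 then a1 * fps_nth f (n - 1) else 0)
     + (if n \<ge> 2 then a2 * fps_nth f (n - 2) else 0) + (if n \<ge> 3 then a3 * fps_nth f (n - 3) else 0)"
proof -
  have "fps_of_poly [:a0, a1, a2, a3:] = fps_const a0 + fps_X * fps_const a1 + fps_X^2 * fps_const a2 + fps_X^3 * fps_const a3"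
    by (simp add: fps_of_poly_pCons algebra_simps power2_eq_square power3_eq_cube)
  note eq = this
  have "fps_of_poly [:a0, a1, a2, a3:] * f = fps_const a0 * f + fps_X * (fps_const a1 * f) + fps_X^2 * (fps_const a2 * f) + fps_X^3 * (fps_const a3 * f)"
    unfolding eq by (simp only: distrib_right mult.assoc)
  then show ?thesis by (simp add: fps_X_power_mult_nth)
qed

lemma nat_cases4: "P 0 \<Longrightarrow> P 1 \<Longrightarrow> P 2 \<Longrightarrow> (\<And>m. P (m + 3)) \<Longrightarrow> P (n::nat)"
  by (metis One_nat_def Suc_1 add.commute add_2_eq_Suc' numeral_3_eq_3 add_Suc_right not0_implies_Suc)



lemma Gk_nth': "fps_nth (Gk k) j = of_nat ((k + j) choose j)"
  by (simp add: Gk_def)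

lemma T20: "fps_nth (Gk (b + 2)) n = of_nat ((b + n) choose n) * ((of_nat b + of_nat n + 1) * (of_nat b + of_nat n + 2)) / (of_nat (Suc (b)) * of_nat (Suc (Suc (b))))"
  unfolding Gk_nth'
  apply (simp only: choose_fact_rat)
  apply (simp add: numeral_eq_Suc add_Suc_right add_Suc fact_Suc del: of_nat_Suc)
  apply (simp add: field_simps del: of_nat_Suc)
  apply (simp add: of_nat_Suc algebra_simps)
  done

lemma T21: "(if 1 \<le> n then (a::rat) * fps_nth (Gk (b + 2)) (n - 1) else 0) = a * (of_nat ((b + n) choose n) * ((of_nat b + of_nat n + 1) * of_nat n) / (of_nat (Suc (b)) * of_nat (Suc (Suc (b)))))"
proof (cases "1 \<le> n")
  case True
  then obtain j where n: "n = j + 1" using le_Suc_ex by (metis add.commute)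
  have "fps_nth (Gk (b + 2)) (n - 1) = of_nat ((b + n) choose n) * ((of_nat b + of_nat n + 1) * of_nat n) / (of_nat (Suc (b)) * of_nat (Suc (Suc (b))))"
    unfolding n Gk_nth'
    apply (simp only: choose_fact_rat)
    apply (simp add: numeral_eq_Suc add_Suc_right add_Suc fact_Suc del: of_nat_Suc)
    apply (simp add: field_simps del: of_nat_Suc)
    apply (simp add: of_nat_Suc algebra_simps)
    done
  then show ?thesis using True by simp
next
  case False
  then have "n < 1" by simp
  then have "((of_nat b + of_nat n + 1) * of_nat n) = (0::rat)" by (auto simp: less_Suc_eq numeral_eq_Suc)
  then show ?thesis using False by simp
qed

lemma T22: "(if 2 \<le> n then (a::rat) * fps_nth (Gk (b + 2)) (n - 2) else 0) = a * (of_nat ((b + n) choose n) * (of_nat n * (of_nat n - 1)) / (of_nat (Suc (b)) * of_nat (Suc (Suc (b)))))"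
proof (cases "2 \<le> n")
  case True
  then obtain j where n: "n = j + 2" using le_Suc_ex by (metis add.commute)
  have "fps_nth (Gk (b + 2)) (n - 2) = of_nat ((b + n) choose n) * (of_nat n * (of_nat n - 1)) / (of_nat (Suc (b)) * of_nat (Suc (Suc (b))))"
    unfolding n Gk_nth'
    apply (simp only: choose_fact_rat)
    apply (simp add: numeral_eq_Suc add_Suc_right add_Suc fact_Suc del: of_nat_Suc)
    apply (simp add: field_simps del: of_nat_Suc)
    apply (simp add: of_nat_Suc algebra_simps)
    done
  then show ?thesis using True by simp
next
  case False
  then have "n < 2" by simp
  then have "(of_nat n * (of_nat n - 1)) = (0::rat)" by (auto simp: less_Suc_eq numeral_eq_Suc)
  then show ?thesis using False by simp
qed

lemma T30: "fps_nth (Gk (b + 3)) n = of_nat ((b + n) choose n) * ((of_nat b + of_nat n + 1) * (of_nat b + of_nat n + 2) * (of_nat b + of_nat n + 3)) / (of_nat (Suc (b)) * of_nat (Suc (Suc (b))) * of_nat (Suc (Suc (Suc (b)))))"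
  unfolding Gk_nth'
  apply (simp only: choose_fact_rat)
  apply (simp add: numeral_eq_Suc add_Suc_right add_Suc fact_Suc del: of_nat_Suc)
  apply (simp add: field_simps del: of_nat_Suc)
  apply (simp add: of_nat_Suc algebra_simps)
  done

lemma T31: "(if 1 \<le> n then (a::rat) * fps_nth (Gk (b + 3)) (n - 1) else 0) = a * (of_nat ((b + n) choose n) * ((of_nat b + of_nat n + 1) * (of_nat b + of_nat n + 2) * of_nat n) / (of_nat (Suc (b)) * of_nat (Suc (Suc (b))) * of_nat (Suc (Suc (Suc (b))))))"
proof (cases "1 \<le> n")
  case True
  then obtain j where n: "n = j + 1" using le_Suc_ex by (metis add.commute)
  have "fps_nth (Gk (b + 3)) (n - 1) = of_nat ((b + n) choose n) * ((of_nat b + of_nat n + 1) * (of_nat b + of_nat n + 2) * of_nat n) / (of_nat (Suc (b)) * of_nat (Suc (Suc (b))) * of_nat (Suc (Suc (Suc (b)))))"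
    unfolding n Gk_nth'
    apply (simp only: choose_fact_rat)
    apply (simp add: numeral_eq_Suc add_Suc_right add_Suc fact_Suc del: of_nat_Suc)
    apply (simp add: field_simps del: of_nat_Suc)
    apply (simp add: of_nat_Suc algebra_simps)
    done
  then show ?thesis using True by simp
next
  case False
  then have "n < 1" by simp
  then have "((of_nat b + of_nat n + 1) * (of_nat b + of_nat n + 2) * of_nat n) = (0::rat)" by (auto simp: less_Suc_eq numeral_eq_Suc)
  then show ?thesis using False by simp
qed

lemma T32: "(if 2 \<le> n then (a::rat) * fps_nth (Gk (b + 3)) (n - 2) else 0) = a * (of_nat ((b + n) choose n) * ((of_nat b + of_nat n + 1) * of_nat n * (of_nat n - 1)) / (of_nat (Suc (b)) * of_nat (Suc (Suc (b))) * of_nat (Suc (Suc (Suc (b))))))"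
proof (cases "2 \<le> n")
  case True
  then obtain j where n: "n = j + 2" using le_Suc_ex by (metis add.commute)
  have "fps_nth (Gk (b + 3)) (n - 2) = of_nat ((b + n) choose n) * ((of_nat b + of_nat n + 1) * of_nat n * (of_nat n - 1)) / (of_nat (Suc (b)) * of_nat (Suc (Suc (b))) * of_nat (Suc (Suc (Suc (b)))))"
    unfolding n Gk_nth'
    apply (simp only: choose_fact_rat)
    apply (simp add: numeral_eq_Suc add_Suc_right add_Suc fact_Suc del: of_nat_Suc)
    apply (simp add: field_simps del: of_nat_Suc)
    apply (simp add: of_nat_Suc algebra_simps)
    done
  then show ?thesis using True by simp
next
  case False
  then have "n < 2" by simp
  then have "((of_nat b + of_nat n + 1) * of_nat n * (of_nat n - 1)) = (0::rat)" by (auto simp: less_Suc_eq numeral_eq_Suc)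
  then show ?thesis using False by simp
qed

lemma T33: "(if 3 \<le> n then (a::rat) * fps_nth (Gk (b + 3)) (n - 3) else 0) = a * (of_nat ((b + n) choose n) * (of_nat n * (of_nat n - 1) * (of_nat n - 2)) / (of_nat (Suc (b)) * of_nat (Suc (Suc (b))) * of_nat (Suc (Suc (Suc (b))))))"
proof (cases "3 \<le> n")
  case True
  then obtain j where n: "n = j + 3" using le_Suc_ex by (metis add.commute)
  have "fps_nth (Gk (b + 3)) (n - 3) = of_nat ((b + n) choose n) * (of_nat n * (of_nat n - 1) * (of_nat n - 2)) / (of_nat (Suc (b)) * of_nat (Suc (Suc (b))) * of_nat (Suc (Suc (Suc (b)))))"
    unfolding n Gk_nth'
    apply (simp only: choose_fact_rat)
    apply (simp add: numeral_eq_Suc add_Suc_right add_Suc fact_Suc del: of_nat_Suc)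
    apply (simp add: field_simps del: of_nat_Suc)
    apply (simp add: of_nat_Suc algebra_simps)
    done
  then show ?thesis using True by simp
next
  case False
  then have "n < 3" by simp
  then have "(of_nat n * (of_nat n - 1) * (of_nat n - 2)) = (0::rat)" by (auto simp: less_Suc_eq numeral_eq_Suc)
  then show ?thesis using False by simp
qed



lemma combine3:
  fixes c H D a0 a1 a2 P0 P1 P2 :: rat
  assumes "D \<noteq> 0" "P0 + a1 * P1 + a2 * P2 = H * D"
  shows "H * c = (c * P0 / D) + a1 * (c * P1 / D) + a2 * (c * P2 / D)"
proof -
  have "(c * P0 / D) + a1 * (c * P1 / D) + a2 * (c * P2 / D) = c * (P0 + a1 * P1 + a2 * P2) / D"
    by (simp add: add_divide_distrib distrib_left mult.left_commute)
  also have "\<dots> = H * c" using assms by simp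
  finally show ?thesis by simp
qed

lemma combine4:
  fixes c H D a0 a1 a2 a3 P0 P1 P2 P3 :: rat
  assumes "D \<noteq> 0" "P0 + a1 * P1 + a2 * P2 + a3 * P3 = H * D"
  shows "H * c = (c * P0 / D) + a1 * (c * P1 / D) + a2 * (c * P2 / D) + a3 * (c * P3 / D)"
proof -
  have "(c * P0 / D) + a1 * (c * P1 / D) + a2 * (c * P2 / D) + a3 * (c * P3 / D) = c * (P0 + a1 * P1 + a2 * P2 + a3 * P3) / D"
    by (simp add: add_divide_distrib distrib_left mult.left_commute)
  also have "\<dots> = H * c" using assms by simp
  finally show ?thesis by simp
qed

lemma zero_if: "(if P then (0::rat) * x else 0) = 0" by simp

lemma choose2: "(of_nat ((2 + n) choose n) :: rat) = (of_nat n + 1) * (of_nat n + 2) / 2"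
  apply (simp only: choose_fact_rat)
  apply (simp add: numeral_eq_Suc add_Suc_right add_Suc fact_Suc del: of_nat_Suc)
  apply (simp add: field_simps del: of_nat_Suc)
  apply (simp add: of_nat_Suc algebra_simps)
  done

lemma choose2': "(of_nat (Suc (Suc n) choose n) :: rat) = (of_nat n + 1) * (of_nat n + 2) / 2"
  using choose2[of n] by simp

lemma hilbA: "mset bs = {#1, 1, b#} \<Longrightarrow> fps_nth (hilb_series bs) n = ((of_nat n + 1) ^ 2) * of_nat ((b + n) choose n)"
  by (simp add: hilb_series_def hilb_fun_prod prod_list_mset power2_eq_square algebra_simps)

lemma hilbB: "mset bs = {#1, 2, b#} \<Longrightarrow> fps_nth (hilb_series bs) n = ((of_nat n + 1) ^ 2 * (of_nat n + 2) / 2) * of_nat ((b + n) choose n)"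
  by (simp add: hilb_series_def hilb_fun_prod prod_list_mset power2_eq_square choose2' field_simps)

lemma hilbC: "mset bs = {#1, 1, 1, b#} \<Longrightarrow> fps_nth (hilb_series bs) n = ((of_nat n + 1) ^ 3) * of_nat ((b + n) choose n)"
  by (simp add: hilb_series_def hilb_fun_prod prod_list_mset power3_eq_cube algebra_simps)

lemma caseA:
  assumes "mset bs = {#1, 1, b#}"
  shows "is_h_poly bs [:1, of_nat (3 * b + 1), of_nat (b ^ 2):]"
proof (rule h_poly_via)
  show "krull_dim bs = Suc (b + 2)" by (simp add: krull_mset assms)
  have p: "[:1, of_nat (3 * b + 1), of_nat (b ^ 2):] = [:1, of_nat (3 * b + 1), of_nat (b ^ 2), 0 :: rat:]"
    by simp
  show "hilb_series bs = fps_of_poly [:1, of_nat (3 * b + 1), of_nat (b ^ 2):] * Gk (b + 2)"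
  proof (rule fps_ext)
    fix n
    show "fps_nth (hilb_series bs) n = fps_nth (fps_of_poly [:1, of_nat (3 * b + 1), of_nat (b ^ 2):] * Gk (b + 2)) n"
      unfolding p poly_mult_nth hilbA[OF assms] T21 T22
      unfolding T20 zero_if add_0_right mult_1
      apply (rule combine3)
       apply simp
      apply (simp add: of_nat_Suc algebra_simps power2_eq_square)
      done
  qed
qed

lemma caseB:
  assumes "mset bs = {#1, 2, b#}"
  shows "is_h_poly bs [:1, 5 * of_nat b + 2, (7 * of_nat b ^ 2 + of_nat b) / 2,
                        (of_nat b ^ 2 * (of_nat b - 1)) / 2:]"
proof (rule h_poly_via)
  show "krull_dim bs = Suc (b + 3)" by (simp add: krull_mset assms)
  show "hilb_series bs = fps_of_poly [:1, 5 * of_nat b + 2, (7 * of_nat b ^ 2 + of_nat b) / 2,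
                        (of_nat b ^ 2 * (of_nat b - 1)) / 2:] * Gk (b + 3)"
  proof (rule fps_ext)
    fix n
    show "fps_nth (hilb_series bs) n = fps_nth (fps_of_poly [:1, 5 * of_nat b + 2, (7 * of_nat b ^ 2 + of_nat b) / 2,
                        (of_nat b ^ 2 * (of_nat b - 1)) / 2:] * Gk (b + 3)) n"
      unfolding poly_mult_nth hilbB[OF assms] T31 T32 T33
      unfolding T30
      unfolding mult_1
      apply (rule combine4)
       apply simp
      apply (simp add: of_nat_Suc field_simps power2_eq_square)
      done
  qed
qed

lemma caseC:
  assumes "mset bs = {#1, 1, 1, b#}"
  shows "is_h_poly bs [:1, 7 * of_nat b + 4, 6 * of_nat b ^ 2 + 4 * of_nat b + 1, of_nat b ^ 3:]"
proof (rule h_poly_via)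
  show "krull_dim bs = Suc (b + 3)" by (simp add: krull_mset assms)
  show "hilb_series bs = fps_of_poly [:1, 7 * of_nat b + 4, 6 * of_nat b ^ 2 + 4 * of_nat b + 1, of_nat b ^ 3:] * Gk (b + 3)"
  proof (rule fps_ext)
    fix n
    show "fps_nth (hilb_series bs) n = fps_nth (fps_of_poly [:1, 7 * of_nat b + 4, 6 * of_nat b ^ 2 + 4 * of_nat b + 1, of_nat b ^ 3:] * Gk (b + 3)) n"
      unfolding poly_mult_nth hilbC[OF assms] T31 T32 T33
      unfolding T30
      unfolding mult_1
      apply (rule combine4)
       apply simp
      apply (simp add: of_nat_Suc algebra_simps power2_eq_square power3_eq_cube)
      done
  qed
qed



lemma sum_ge_len: "(\<forall>x\<in>set xs. (x::nat) > 0) \<Longrightarrow> length xs \<le> sum_list xs"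
  by (induction xs) auto

lemma r_deg_mset: "r_deg bs = sum_mset (mset bs) - Max (set_mset (mset bs))"
  unfolding r_deg_def by (simp add: sum_mset_sum_list)

lemma decomp:
  assumes "bs \<noteq> []"
  obtains m xs where "m = Max (set bs)" "mset bs = add_mset m (mset xs)" "r_deg bs = sum_list xs"
    "length xs = length bs - 1" "\<forall>x\<in>set xs. x \<le> m" "set xs \<subseteq> set bs"
proof -
  define m where "m = Max (set bs)"
  have mi: "m \<in> set bs" using assms by (simp add: m_def)
  define xs where "xs = remove1 m bs"
  have ms: "mset bs = add_mset m (mset xs)" using mi by (simp add: xs_def)
  have "sum_list bs = m + sum_list xs"
    using ms by (metis sum_mset_sum_list sum_mset.add_mset)
  then have "r_deg bs = sum_list xs" by (simp add: r_deg_def m_def)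
  moreover have "length xs = length bs - 1" using mi by (simp add: xs_def length_remove1)
  moreover have "set xs \<subseteq> set bs" by (simp add: xs_def set_remove1_subset)
  moreover have "\<forall>x\<in>set xs. x \<le> m" using calculation(3) by (auto simp: m_def)
  ultimately show ?thesis using that m_def ms by blast
qed

lemma r2_iff:
  assumes "length bs \<ge> 3" and "\<forall>x\<in>set bs. x > 0"
  shows "r_deg bs = 2 \<longleftrightarrow> (\<exists>b\<ge>1. mset bs = {#1, 1, b#})"
proof
  assume r: "r_deg bs = 2"
  obtain m xs where d: "m = Max (set bs)" "mset bs = add_mset m (mset xs)" "r_deg bs = sum_list xs"
    "length xs = length bs - 1" "\<forall>x\<in>set xs. x \<le> m" "set xs \<subseteq> set bs"
    using decomp assms(1) by (metis list.size(3) not_numeral_le_zero)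
  have pos: "\<forall>x\<in>set xs. x > 0" using d(6) assms(2) by auto
  have "length xs \<le> 2" using sum_ge_len[OF pos] r d(3) by simp
  then have "length xs = 2" using d(4) assms(1) by simp
  then obtain x y where xy: "xs = [x, y]"
    by (metis One_nat_def Suc_1 length_0_conv length_Suc_conv)
  have "x = 1" "y = 1" using pos xy r d(3) by auto
  moreover have "m \<ge> 1" using d(5) xy \<open>x = 1\<close> by auto
  ultimately show "\<exists>b\<ge>1. mset bs = {#1, 1, b#}" using d(2) xy by (auto intro!: exI[of _ m])
next
  assume "\<exists>b\<ge>1. mset bs = {#1, 1, b#}"
  then obtain b where b: "b \<ge> 1" "mset bs = {#1, 1, b#}" by blast
  have "Max (set_mset (mset bs)) = b" using b by (simp add: max_def)
  then show "r_deg bs = 2" unfolding r_deg_mset using b by simp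
qed

lemma r3_iff:
  assumes "length bs \<ge> 3" and "\<forall>x\<in>set bs. x > 0"
  shows "r_deg bs = 3 \<longleftrightarrow>
         (\<exists>b\<ge>2. mset bs = {#1, 2, b#}) \<or> (\<exists>b\<ge>1. mset bs = {#1, 1, 1, b#})"
proof
  assume r: "r_deg bs = 3"
  obtain m xs where d: "m = Max (set bs)" "mset bs = add_mset m (mset xs)" "r_deg bs = sum_list xs"
    "length xs = length bs - 1" "\<forall>x\<in>set xs. x \<le> m" "set xs \<subseteq> set bs"
    using decomp assms(1) by (metis list.size(3) not_numeral_le_zero)
  have pos: "\<forall>x\<in>set xs. x > 0" using d(6) assms(2) by auto
  have "length xs \<le> 3" using sum_ge_len[OF pos] r d(3) by simp
  then have "length xs = 2 \<or> length xs = 3" using d(4) assms(1) by auto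
  then show "(\<exists>b\<ge>2. mset bs = {#1, 2, b#}) \<or> (\<exists>b\<ge>1. mset bs = {#1, 1, 1, b#})"
  proof
    assume "length xs = 2"
    then obtain x y where xy: "xs = [x, y]"
      by (metis One_nat_def Suc_1 length_0_conv length_Suc_conv)
    have "(x = 1 \<and> y = 2) \<or> (x = 2 \<and> y = 1)" using pos xy r d(3) by auto
    moreover have "m \<ge> x" "m \<ge> y" using d(5) xy by auto
    ultimately show ?thesis using d(2) xy by (auto intro!: exI[of _ m])
  next
    assume "length xs = 3"
    then obtain x y z where xy: "xs = [x, y, z]"
      by (metis length_0_conv length_Suc_conv numeral_3_eq_3)
    have "x = 1" "y = 1" "z = 1" using pos xy r d(3) by auto
    moreover have "m \<ge> 1" using d(5) xy \<open>x = 1\<close> by auto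
    ultimately show ?thesis using d(2) xy by (auto intro!: exI[of _ m])
  qed
next
  assume "(\<exists>b\<ge>2. mset bs = {#1, 2, b#}) \<or> (\<exists>b\<ge>1. mset bs = {#1, 1, 1, b#})"
  then show "r_deg bs = 3"
  proof
    assume "\<exists>b\<ge>2. mset bs = {#1, 2, b#}"
    then obtain b where b: "b \<ge> 2" "mset bs = {#1, 2, b#}" by blast
    have "Max (set_mset (mset bs)) = b" using b by (simp add: max_def)
    then show "r_deg bs = 3" unfolding r_deg_mset using b by simp
  next
    assume "\<exists>b\<ge>1. mset bs = {#1, 1, 1, b#}"
    then obtain b where b: "b \<ge> 1" "mset bs = {#1, 1, 1, b#}" by blast
    have "Max (set_mset (mset bs)) = b" using b by (simp add: max_def)
    then show "r_deg bs = 3" unfolding r_deg_mset using b by simp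
  qed
qed

theorem mainTheorem6:
  fixes bs :: "nat list"
  assumes "length bs \<ge> 3"
    and "\<forall>x\<in>set bs. x > 0"
  shows "(r_deg bs = 2 \<longleftrightarrow> (\<exists>b\<ge>1. mset bs = {#1, 1, b#}))
    \<and> (\<forall>b\<ge>1. mset bs = {#1, 1, b#} \<longrightarrow>
         is_h_poly bs [:1, of_nat (3 * b + 1), of_nat (b ^ 2):])
    \<and> (r_deg bs = 3 \<longleftrightarrow>
         (\<exists>b\<ge>2. mset bs = {#1, 2, b#}) \<or> (\<exists>b\<ge>1. mset bs = {#1, 1, 1, b#}))
    \<and> (\<forall>b\<ge>2. mset bs = {#1, 2, b#} \<longrightarrow>
         is_h_poly bs [:1, 5 * of_nat b + 2, (7 * of_nat b ^ 2 + of_nat b) / 2,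
                        (of_nat b ^ 2 * (of_nat b - 1)) / 2:])
    \<and> (\<forall>b\<ge>1. mset bs = {#1, 1, 1, b#} \<longrightarrow>
         is_h_poly bs [:1, 7 * of_nat b + 4, 6 * of_nat b ^ 2 + 4 * of_nat b + 1, of_nat b ^ 3:])"
proof (intro conjI)
  show "r_deg bs = 2 \<longleftrightarrow> (\<exists>b\<ge>1. mset bs = {#1, 1, b#})" using r2_iff[OF assms] .
  show "r_deg bs = 3 \<longleftrightarrow>
         (\<exists>b\<ge>2. mset bs = {#1, 2, b#}) \<or> (\<exists>b\<ge>1. mset bs = {#1, 1, 1, b#})" using r3_iff[OF assms] .
  show "\<forall>b\<ge>1. mset bs = {#1, 1, b#} \<longrightarrow>
         is_h_poly bs [:1, of_nat (3 * b + 1), of_nat (b ^ 2):]" using caseA by blast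
  show "\<forall>b\<ge>2. mset bs = {#1, 2, b#} \<longrightarrow>
         is_h_poly bs [:1, 5 * of_nat b + 2, (7 * of_nat b ^ 2 + of_nat b) / 2,
                        (of_nat b ^ 2 * (of_nat b - 1)) / 2:]" using caseB by blast
  show "\<forall>b\<ge>1. mset bs = {#1, 1, 1, b#} \<longrightarrow>
         is_h_poly bs [:1, 7 * of_nat b + 4, 6 * of_nat b ^ 2 + 4 * of_nat b + 1, of_nat b ^ 3:]" using caseC by blast
qed

end
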